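(* Consider the $\mathrm{AND}$ instance with $n$ variables: $f(x)=\bigwedge_{i=1}^n x_i$, the input $x$ uniform on $\{0,1\}^n$, and costs $(c_1,\dots,c_n)$ a uniformly random permutation of $\{1,\dots,n\}$. Then the offline benchmark satisfies $\mathrm{opt}^{\mathrm{avg}}_0=O(1)$, while every zero-error online algorithm has expected cost $\Omega(n)$ on this instance.
   Context: Online priced query model: $f$ is given; the input and the costs are unknown; the algorithm maintains investments $\theta$ (initially $0$), each step increasing one coordinate by a positive amount; $x_i$ is revealed once $\theta_i\ge c_i$; cost is $\|\theta\|_1$ at halting. Offline algorithms know the costs and pay $c_i$ to reveal $x_i$. Zero-error means the output always equals $f(x)$. Expected costs (and $\mathrm{opt}^{\mathrm{avg}}_0$, the optimal expected cost of a zero-error offline algorithm) are taken over the random input, the random costs, and the algorithm's randomness; the implied constants are absolute. *)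

theory Defs
  imports "HOL-Probability.Probability" "HOL-Combinatorics.Multiset_Permutations"
begin

text \<open>Inputs are bit lists of length n (indices 0..n-1), cost vectors are lists
  that are permutations of {1..n}; c ! i is the cost of variable i.\<close>

definition Inputs :: "nat \<Rightarrow> bool list set" where
  "Inputs n = {x. length x = n}"

definition Costs :: "nat \<Rightarrow> nat list set" where
  "Costs n = permutations_of_set {1..n}"

definition AND_f :: "bool list \<Rightarrow> bool" where
  "AND_f x = (\<forall>b\<in>set x. b)"

text \<open>A deterministic online algorithm maps the history of observations to an action:
  either invest a positive amount delta in coordinate i (Inl (i, delta)) or halt with an
  output (Inr b).  After each investment the algorithm observes whether the invested
  coordinate is revealed (Some value) or not (None).\<close>

type_synonym on_alg = "bool option list \<Rightarrow> (nat \<times> real) + bool"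

fun on_run :: "on_alg \<Rightarrow> bool list \<Rightarrow> nat list \<Rightarrow> nat \<Rightarrow> (nat \<Rightarrow> real) \<times> bool option list" where
  "on_run A x c 0 = ((\<lambda>_. 0), [])"
| "on_run A x c (Suc k) =
     (case on_run A x c k of (\<theta>, h) \<Rightarrow>
        (case A h of
           Inl (i, \<delta>) \<Rightarrow>
             (let \<theta>' = \<theta>(i := \<theta> i + \<delta>)
              in (\<theta>', h @ [if real (c ! i) \<le> \<theta>' i then Some (x ! i) else None]))
         | Inr b \<Rightarrow> (\<theta>, h)))"

definition on_valid :: "nat \<Rightarrow> on_alg \<Rightarrow> bool" where
  "on_valid n A = (\<forall>h i \<delta>. A h = Inl (i, \<delta>) \<longrightarrow> i < n \<and> \<delta> > 0)"

definition on_halts :: "on_alg \<Rightarrow> bool list \<Rightarrow> nat list \<Rightarrow> bool" where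
  "on_halts A x c = (\<exists>k b. A (snd (on_run A x c k)) = Inr b)"

definition on_time :: "on_alg \<Rightarrow> bool list \<Rightarrow> nat list \<Rightarrow> nat" where
  "on_time A x c = (LEAST k. \<exists>b. A (snd (on_run A x c k)) = Inr b)"

definition on_output :: "on_alg \<Rightarrow> bool list \<Rightarrow> nat list \<Rightarrow> bool" where
  "on_output A x c = (case A (snd (on_run A x c (on_time A x c))) of Inr b \<Rightarrow> b | Inl _ \<Rightarrow> False)"

definition on_cost :: "on_alg \<Rightarrow> bool list \<Rightarrow> nat list \<Rightarrow> real" where
  "on_cost A x c = (\<Sum>i<length x. fst (on_run A x c (on_time A x c)) i)"

definition on_zero_error :: "nat \<Rightarrow> on_alg \<Rightarrow> bool" where
  "on_zero_error n A = (\<forall>x\<in>Inputs n. \<forall>c\<in>Costs n. on_halts A x c \<and> on_output A x c = AND_f x)"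

definition on_exp_cost :: "nat \<Rightarrow> on_alg \<Rightarrow> real" where
  "on_exp_cost n A = (\<Sum>x\<in>Inputs n. \<Sum>c\<in>Costs n. on_cost A x c) / (real (card (Inputs n)) * real (card (Costs n)))"

text \<open>A deterministic offline algorithm knows the cost vector c; given the values revealed so far
  it either queries variable i (Inl i, paying c ! i) or halts with an output (Inr b).\<close>

type_synonym off_alg = "nat list \<Rightarrow> bool list \<Rightarrow> nat + bool"

fun off_run :: "off_alg \<Rightarrow> bool list \<Rightarrow> nat list \<Rightarrow> nat \<Rightarrow> real \<times> bool list" where
  "off_run B x c 0 = (0, [])"
| "off_run B x c (Suc k) =
     (case off_run B x c k of (s, h) \<Rightarrow>
        (case B c h of
           Inl i \<Rightarrow> (s + real (c ! i), h @ [x ! i])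
         | Inr b \<Rightarrow> (s, h)))"

definition off_valid :: "nat \<Rightarrow> off_alg \<Rightarrow> bool" where
  "off_valid n B = (\<forall>c h i. B c h = Inl i \<longrightarrow> i < n)"

definition off_halts :: "off_alg \<Rightarrow> bool list \<Rightarrow> nat list \<Rightarrow> bool" where
  "off_halts B x c = (\<exists>k b. B c (snd (off_run B x c k)) = Inr b)"

definition off_time :: "off_alg \<Rightarrow> bool list \<Rightarrow> nat list \<Rightarrow> nat" where
  "off_time B x c = (LEAST k. \<exists>b. B c (snd (off_run B x c k)) = Inr b)"

definition off_output :: "off_alg \<Rightarrow> bool list \<Rightarrow> nat list \<Rightarrow> bool" where
  "off_output B x c = (case B c (snd (off_run B x c (off_time B x c))) of Inr b \<Rightarrow> b | Inl _ \<Rightarrow> False)"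

definition off_cost :: "off_alg \<Rightarrow> bool list \<Rightarrow> nat list \<Rightarrow> real" where
  "off_cost B x c = fst (off_run B x c (off_time B x c))"

definition off_zero_error :: "nat \<Rightarrow> off_alg \<Rightarrow> bool" where
  "off_zero_error n B = (\<forall>x\<in>Inputs n. \<forall>c\<in>Costs n. off_halts B x c \<and> off_output B x c = AND_f x)"

definition off_exp_cost :: "nat \<Rightarrow> off_alg \<Rightarrow> real" where
  "off_exp_cost n B = (\<Sum>x\<in>Inputs n. \<Sum>c\<in>Costs n. off_cost B x c) / (real (card (Inputs n)) * real (card (Costs n)))"

text \<open>Optimal expected cost of a zero-error offline algorithm (randomization does not lower
  the infimum, so deterministic algorithms suffice).\<close>
definition opt_avg0 :: "nat \<Rightarrow> real" where
  "opt_avg0 n = Inf {off_exp_cost n B | B. off_valid n B \<and> off_zero_error n B}"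

end

theory Submission
  imports Defs
begin

fun canon :: "on_alg \<Rightarrow> nat \<Rightarrow> (nat \<Rightarrow> real) \<times> bool option list" where
  "canon A 0 = ((\<lambda>_. 0), [])"
| "canon A (Suc k) = (case canon A k of (\<theta>, h) \<Rightarrow>
     (case A h of Inl (i, \<delta>) \<Rightarrow> (\<theta>(i := \<theta> i + \<delta>), h @ [None]) | Inr b \<Rightarrow> (\<theta>, h)))"

definition avoids :: "nat \<Rightarrow> nat list \<Rightarrow> (nat \<Rightarrow> real) \<Rightarrow> bool" where
  "avoids n c \<theta> = (\<forall>i<n. \<theta> i < real (c ! i))"

lemma canon_step_mono:
  assumes "on_valid n A" shows "fst (canon A k) i \<le> fst (canon A (Suc k)) i"
proof -
  obtain \<theta> h where e: "canon A k = (\<theta>, h)" by fastforce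
  show ?thesis
  proof (cases "A h")
    case (Inl p) then obtain j d where "A h = Inl (j, d)" by (cases p) auto
    with assms have "d > 0" unfolding on_valid_def by blast
    with e \<open>A h = Inl (j, d)\<close> show ?thesis by auto
  next
    case (Inr b) with e show ?thesis by auto
  qed
qed

lemma canon_mono:
  assumes "on_valid n A" "k \<le> k'" shows "fst (canon A k) i \<le> fst (canon A k') i"
  using lift_Suc_mono_le[of "\<lambda>k. fst (canon A k) i", OF canon_step_mono[OF assms(1)] assms(2)] .

lemma canon_nonneg: assumes "on_valid n A" shows "fst (canon A k) i \<ge> 0"
  using canon_mono[OF assms, of 0 k i] by simp

lemma run_step_mono:
  assumes "on_valid n A" shows "fst (on_run A x c k) i \<le> fst (on_run A x c (Suc k)) i"
proof -
  obtain \<theta> h where e: "on_run A x c k = (\<theta>, h)" by fastforce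
  show ?thesis
  proof (cases "A h")
    case (Inl p) then obtain j d where "A h = Inl (j, d)" by (cases p) auto
    with assms have "d > 0" unfolding on_valid_def by blast
    with e \<open>A h = Inl (j, d)\<close> show ?thesis by (auto simp: Let_def)
  next
    case (Inr b) with e show ?thesis by auto
  qed
qed

lemma run_mono:
  assumes "on_valid n A" "k \<le> k'" shows "fst (on_run A x c k) i \<le> fst (on_run A x c k') i"
  using lift_Suc_mono_le[of "\<lambda>k. fst (on_run A x c k) i", OF run_step_mono[OF assms(1)] assms(2)] .

lemma run_nonneg: assumes "on_valid n A" shows "fst (on_run A x c k) i \<ge> 0"
  using run_mono[OF assms, of 0 k x c i] by simp

lemma run_eq_canon:
  assumes "on_valid n A" "\<forall>j\<le>k. avoids n c (fst (canon A j))"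
  shows "on_run A x c k = canon A k"
  using assms(2)
proof (induction k)
  case 0 then show ?case by simp
next
  case (Suc k)
  then have IH: "on_run A x c k = canon A k" by simp
  obtain \<theta> h where e: "canon A k = (\<theta>, h)" by fastforce
  have av: "avoids n c (fst (canon A (Suc k)))" using Suc.prems by blast
  show ?case
  proof (cases "A h")
    case (Inl p) then obtain j d where jd: "A h = Inl (j, d)" by (cases p) auto
    with assms(1) have "j < n" unfolding on_valid_def by blast
    with av e jd have "\<not> real (c ! j) \<le> \<theta> j + d" by (auto simp: avoids_def)
    with e jd IH show ?thesis by (auto simp: Let_def)
  next
    case (Inr b) with e IH show ?thesis by auto
  qed
qed

lemma run_fst_canon:
  assumes "on_valid n A" "\<forall>j<k. avoids n c (fst (canon A j))"
  shows "fst (on_run A x c k) = fst (canon A k)"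
proof (cases k)
  case 0 then show ?thesis by simp
next
  case (Suc m)
  with assms have IH: "on_run A x c m = canon A m" by (intro run_eq_canon) auto
  obtain \<theta> h where e: "canon A m = (\<theta>, h)" by fastforce
  show ?thesis unfolding Suc using e IH by (auto simp: Let_def split: sum.split prod.split)
qed


lemma exists_fail:
  assumes v: "on_valid n A" and z: "on_zero_error n A" and n: "n \<ge> 1"
    and c: "c \<in> Costs n" and x: "x \<in> Inputs n"
  shows "\<exists>j\<le>on_time A x c. \<not> avoids n c (fst (canon A j))"
proof (rule ccontr)
  assume "\<not> ?thesis"
  then have all: "\<forall>j\<le>on_time A x c. avoids n c (fst (canon A j))" by blast
  define K where "K = on_time A x c"
  have eq: "\<And>x' j. j \<le> K \<Longrightarrow> on_run A x' c j = canon A j"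
    using run_eq_canon[OF v] all unfolding K_def by auto
  have "on_halts A x c" using z x c unfolding on_zero_error_def by blast
  then have "\<exists>b. A (snd (on_run A x c K)) = Inr b"
    unfolding on_halts_def K_def on_time_def by (rule LeastI_ex) 
  then obtain b where b: "A (snd (canon A K)) = Inr b" using eq[of K x] by auto
  have tK: "on_time A x' c = K" for x'
    unfolding on_time_def
  proof (rule Least_equality)
    show "\<exists>b. A (snd (on_run A x' c K)) = Inr b" using b eq[of K x'] by auto
  next
    fix y assume y: "\<exists>b. A (snd (on_run A x' c y)) = Inr b"
    show "K \<le> y"
    proof (rule ccontr)
      assume "\<not> K \<le> y"
      then have "y < K" by simp
      then have "on_run A x' c y = on_run A x c y" using eq[of y x'] eq[of y x] by simp
      with y have "\<exists>b. A (snd (on_run A x c y)) = Inr b" by simp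
      then have "K \<le> y" unfolding K_def on_time_def by (rule Least_le)
      with \<open>y < K\<close> show False by simp
    qed
  qed
  have out: "on_output A x' c = b" for x'
    unfolding on_output_def tK using eq[of K x'] b by simp
  have "replicate n True \<in> Inputs n" "replicate n False \<in> Inputs n" by (auto simp: Inputs_def)
  then have "on_output A (replicate n True) c = AND_f (replicate n True)"
     "on_output A (replicate n False) c = AND_f (replicate n False)"
    using z c unfolding on_zero_error_def by blast+
  then show False using out n by (auto simp: AND_f_def)
qed

lemma exists_cheap_fail:
  assumes v: "on_valid n A" and z: "on_zero_error n A" and n: "n \<ge> 1"
    and c: "c \<in> Costs n" and x: "x \<in> Inputs n"
  shows "\<exists>j. \<not> avoids n c (fst (canon A j)) \<and> (\<Sum>i<n. fst (canon A j) i) \<le> on_cost A x c"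
proof -
  obtain j0 where j0: "j0 \<le> on_time A x c" "\<not> avoids n c (fst (canon A j0))"
    using exists_fail[OF assms] by blast
  define j where "j = (LEAST j. \<not> avoids n c (fst (canon A j)))"
  have jf: "\<not> avoids n c (fst (canon A j))" unfolding j_def by (rule LeastI, rule j0(2))
  have jle: "j \<le> j0" unfolding j_def by (rule Least_le, rule j0(2))
  have "\<forall>j'<j. avoids n c (fst (canon A j'))" unfolding j_def using not_less_Least by blast
  then have f: "fst (on_run A x c j) = fst (canon A j)" by (rule run_fst_canon[OF v])
  have "length x = n" using x by (simp add: Inputs_def)
  have "(\<Sum>i<n. fst (canon A j) i) = (\<Sum>i<n. fst (on_run A x c j) i)" using f by simp
  also have "\<dots> \<le> (\<Sum>i<n. fst (on_run A x c (on_time A x c)) i)"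
    by (rule sum_mono, rule run_mono[OF v]) (use jle j0(1) in simp)
  also have "\<dots> = on_cost A x c" unfolding on_cost_def using \<open>length x = n\<close> by simp
  finally show ?thesis using jf by blast
qed

definition sw :: "nat \<Rightarrow> nat \<Rightarrow> nat \<Rightarrow> nat" where
  "sw v w u = (if u = v then w else if u = w then v else u)"

lemma sw_inv[simp]: "sw v w (sw v w u) = u" by (auto simp: sw_def)
lemma inj_sw: "inj (sw v w)" by (metis injI sw_inv)

lemma costs_len: "c \<in> Costs n \<Longrightarrow> length c = n"
  unfolding Costs_def using length_finite_permutations_of_set by fastforce

lemma costs_nth: "c \<in> Costs n \<Longrightarrow> i < n \<Longrightarrow> c ! i \<in> {1..n}"
  using costs_len[of c n] unfolding Costs_def permutations_of_set_def
  by (metis (mono_tags, lifting) mem_Collect_eq nth_mem)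
lemma sw_image: "v \<in> {1..n} \<Longrightarrow> w \<in> {1..n} \<Longrightarrow> sw v w ` {1..n} = {1..n}"
proof
  assume "v \<in> {1..n}" "w \<in> {1..n}"
  then show "sw v w ` {1..n} \<subseteq> {1..n}" by (auto simp: sw_def)
  show "{1..n} \<subseteq> sw v w ` {1..n}"
  proof
    fix u assume "u \<in> {1..(n::nat)}"
    then have "sw v w u \<in> {1..n}" using \<open>v \<in> {1..n}\<close> \<open>w \<in> {1..n}\<close> by (auto simp: sw_def)
    then show "u \<in> sw v w ` {1..n}" by (metis image_eqI sw_inv)
  qed
qed

lemma map_sw_costs:
  assumes "c \<in> Costs n" "v \<in> {1..n}" "w \<in> {1..n}"
  shows "map (sw v w) c \<in> Costs n"
proof -
  have "set c = {1..n}" "distinct c" using assms(1) unfolding Costs_def permutations_of_set_def by auto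
  moreover have "sw v w ` {1..n} = {1..n}" using assms(2,3) by (rule sw_image)
  moreover have "inj_on (sw v w) (set c)" using inj_sw by (rule inj_on_subset) simp
  ultimately show ?thesis unfolding Costs_def permutations_of_set_def
    by (simp add: distinct_map)
qed
lemma perm_count_eq:
  assumes i: "i < n" and v: "v \<in> {1..n}" and w: "w \<in> {1..n}"
  shows "card {c \<in> Costs n. c ! i = v} = card {c \<in> Costs n. c ! i = w}"
proof (rule bij_betw_same_card[of "map (sw v w)"], rule bij_betw_byWitness[where f' = "map (sw v w)"])
  have mm: "map (sw v w) (map (sw v w) a) = a" for a by (induct a) auto
  show "\<forall>a\<in>{c \<in> Costs n. c ! i = v}. map (sw v w) (map (sw v w) a) = a" using mm by blast
  show "\<forall>a\<in>{c \<in> Costs n. c ! i = w}. map (sw v w) (map (sw v w) a) = a" using mm by blast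
  show "map (sw v w) ` {c \<in> Costs n. c ! i = v} \<subseteq> {c \<in> Costs n. c ! i = w}"
  proof (rule image_subsetI)
    fix c assume c: "c \<in> {c \<in> Costs n. c ! i = v}"
    then have "length c = n" using costs_len by blast
    then show "map (sw v w) c \<in> {c \<in> Costs n. c ! i = w}"
      using c map_sw_costs[OF _ v w] i by (simp add: sw_def)
  qed
  show "map (sw v w) ` {c \<in> Costs n. c ! i = w} \<subseteq> {c \<in> Costs n. c ! i = v}"
  proof (rule image_subsetI)
    fix c assume c: "c \<in> {c \<in> Costs n. c ! i = w}"
    then have "length c = n" using costs_len by blast
    then show "map (sw v w) c \<in> {c \<in> Costs n. c ! i = v}"
      using c map_sw_costs[OF _ v w] i by (simp add: sw_def)
  qed
qed

lemma perm_count_total: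
  assumes i: "i < n"
  shows "card (Costs n) = n * card {c \<in> Costs n. c ! i = 1}"
proof -
  have eq: "Costs n = (\<Union>v\<in>{1..n}. {c \<in> Costs n. c ! i = v})" using costs_nth[OF _ i] by auto
  have fin: "finite (Costs n)" by (simp add: Costs_def)
  have "card (\<Union>v\<in>{1..n}. {c \<in> Costs n. c ! i = v}) = (\<Sum>v\<in>{1..n}. card {c \<in> Costs n. c ! i = v})"
    by (rule card_UN_disjoint) (use fin in auto)
  then have "card (Costs n) = (\<Sum>v\<in>{1..n}. card {c \<in> Costs n. c ! i = v})"
    using eq by metis
  also have "\<dots> = (\<Sum>v\<in>{1..n}. card {c \<in> Costs n. c ! i = 1})"
    by (rule sum.cong[OF refl], rule perm_count_eq[OF i]) (use i in auto)
  finally show ?thesis by simp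
qed
lemma perm_count_le:
  assumes i: "i < n" and r: "r \<ge> 0"
  shows "real (card {c \<in> Costs n. real (c ! i) \<le> r}) \<le> r * real (card (Costs n)) / real n"
proof -
  define N where "N = card {c \<in> Costs n. c ! i = 1}"
  define V where "V = {v \<in> {1..n}. real v \<le> r}"
  have fin: "finite (Costs n)" by (simp add: Costs_def)
  have eq: "{c \<in> Costs n. real (c ! i) \<le> r} = (\<Union>v\<in>V. {c \<in> Costs n. c ! i = v})"
    using costs_nth[OF _ i] by (auto simp: V_def)
  have "card (\<Union>v\<in>V. {c \<in> Costs n. c ! i = v}) = (\<Sum>v\<in>V. card {c \<in> Costs n. c ! i = v})"
    by (rule card_UN_disjoint) (use fin in \<open>auto simp: V_def\<close>)
  then have "card {c \<in> Costs n. real (c ! i) \<le> r} = (\<Sum>v\<in>V. card {c \<in> Costs n. c ! i = v})"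
    using eq by metis
  also have "\<dots> = (\<Sum>v\<in>V. N)" unfolding N_def
    by (rule sum.cong[OF refl], rule perm_count_eq[OF i]) (use i in \<open>auto simp: V_def\<close>)
  also have "\<dots> = card V * N" by simp
  finally have e: "card {c \<in> Costs n. real (c ! i) \<le> r} = card V * N" .
  have "V \<subseteq> {1..nat \<lfloor>r\<rfloor>}" unfolding V_def proof
    fix v assume "v \<in> {v \<in> {1..n}. real v \<le> r}"
    then show "v \<in> {1..nat \<lfloor>r\<rfloor>}" using le_nat_floor by auto
  qed
  then have "card V \<le> card {1..nat \<lfloor>r\<rfloor>}" by (rule card_mono[rotated]) simp
  then have "card V \<le> nat \<lfloor>r\<rfloor>" by simp
  then have "real (card V) \<le> real (nat \<lfloor>r\<rfloor>)" by simp
  also have "\<dots> \<le> r" by (rule of_nat_floor[OF r])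
  finally have cv: "real (card V) \<le> r" .
  have tot: "real (card (Costs n)) = real n * real N" using perm_count_total[OF i] by (simp add: N_def)
  have "real (card V * N) \<le> r * real N" using cv by (simp add: mult_right_mono)
  also have "\<dots> = r * real (card (Costs n)) / real n" using i tot by simp
  finally show ?thesis using e by simp
qed

lemma bad_count:
  assumes t: "\<And>i. \<theta> i \<ge> 0"
  shows "real (card {c \<in> Costs n. \<not> avoids n c \<theta>}) \<le> (\<Sum>i<n. \<theta> i) * real (card (Costs n)) / real n"
proof -
  have fin: "finite (Costs n)" by (simp add: Costs_def)
  have eq: "{c \<in> Costs n. \<not> avoids n c \<theta>} = (\<Union>i<n. {c \<in> Costs n. real (c ! i) \<le> \<theta> i})"
    unfolding avoids_def by (auto simp: not_less)
  have "card (\<Union>i<n. {c \<in> Costs n. real (c ! i) \<le> \<theta> i}) \<le> (\<Sum>i<n. card {c \<in> Costs n. real (c ! i) \<le> \<theta> i})"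
    by (rule card_UN_le) simp
  then have "card {c \<in> Costs n. \<not> avoids n c \<theta>} \<le> (\<Sum>i<n. card {c \<in> Costs n. real (c ! i) \<le> \<theta> i})"
    by (simp only: eq)
  then have "real (card {c \<in> Costs n. \<not> avoids n c \<theta>}) \<le> real (\<Sum>i<n. card {c \<in> Costs n. real (c ! i) \<le> \<theta> i})"
    by (simp only: of_nat_le_iff)
  also have "\<dots> = (\<Sum>i<n. real (card {c \<in> Costs n. real (c ! i) \<le> \<theta> i}))"
    by (rule of_nat_sum)
  also have "\<dots> \<le> (\<Sum>i<n. \<theta> i * real (card (Costs n)) / real n)"
    by (rule sum_mono, rule perm_count_le) (use t in auto)
  also have "\<dots> = (\<Sum>i<n. \<theta> i) * real (card (Costs n)) / real n"
    by (simp add: sum_divide_distrib sum_distrib_right)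
  finally show ?thesis .
qed

lemma cost_nonneg: "on_valid n A \<Longrightarrow> on_cost A x c \<ge> 0"
  unfolding on_cost_def by (rule sum_nonneg) (use run_nonneg in blast)

lemma avoids_anti: "avoids n c \<theta>' \<Longrightarrow> (\<And>i. \<theta> i \<le> \<theta>' i) \<Longrightarrow> avoids n c \<theta>"
  unfolding avoids_def by (meson le_less_trans)

lemma fin_inputs: "finite (Inputs n)"
proof -
  have "Inputs n = {xs. set xs \<subseteq> (UNIV::bool set) \<and> length xs = n}" by (auto simp: Inputs_def)
  then show ?thesis using finite_lists_length_eq[of "UNIV::bool set" n] by simp
qed

lemma fin_costs: "finite (Costs n)" by (simp add: Costs_def)

lemma per_input:
  assumes v: "on_valid n A" and z: "on_zero_error n A" and n: "n \<ge> 1" and x: "x \<in> Inputs n"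
  shows "real n * real (card (Costs n)) / 4 \<le> (\<Sum>c\<in>Costs n. on_cost A x c)"
proof -
  define t :: real where "t = real n / 2"
  define Bad where "Bad = {c \<in> Costs n. on_cost A x c < t}"
  have finB: "finite Bad" using fin_costs by (simp add: Bad_def)
  have cardB: "real (card Bad) \<le> real (card (Costs n)) / 2"
  proof (cases "Bad = {}")
    case True then show ?thesis by simp
  next
    case False
    define j where "j = (\<lambda>c. SOME j. \<not> avoids n c (fst (canon A j)) \<and> (\<Sum>i<n. fst (canon A j) i) \<le> on_cost A x c)"
    have jP: "\<not> avoids n c (fst (canon A (j c))) \<and> (\<Sum>i<n. fst (canon A (j c)) i) \<le> on_cost A x c"
      if "c \<in> Bad" for c
      unfolding j_def by (rule someI_ex, rule exists_cheap_fail[OF v z n _ x]) (use that in \<open>simp add: Bad_def\<close>)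
    define jm where "jm = Max (j ` Bad)"
    have "jm \<in> j ` Bad" unfolding jm_def using False finB by simp
    then obtain c0 where c0: "c0 \<in> Bad" "j c0 = jm" by blast
    have sub: "Bad \<subseteq> {c \<in> Costs n. \<not> avoids n c (fst (canon A jm))}"
    proof
      fix c assume c: "c \<in> Bad"
      have "j c \<le> jm" unfolding jm_def using finB c by simp
      then have "\<And>i. fst (canon A (j c)) i \<le> fst (canon A jm) i" by (rule canon_mono[OF v])
      then have "\<not> avoids n c (fst (canon A jm))" using jP[OF c] avoids_anti by blast
      then show "c \<in> {c \<in> Costs n. \<not> avoids n c (fst (canon A jm))}" using c by (simp add: Bad_def)
    qed
    have s: "(\<Sum>i<n. fst (canon A jm) i) \<le> t"
      using jP[OF c0(1)] c0 by (simp add: Bad_def)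
    have "real (card Bad) \<le> real (card {c \<in> Costs n. \<not> avoids n c (fst (canon A jm))})"
      using card_mono[OF _ sub] fin_costs by simp
    also have "\<dots> \<le> (\<Sum>i<n. fst (canon A jm) i) * real (card (Costs n)) / real n"
      by (rule bad_count) (rule canon_nonneg[OF v])
    also have "\<dots> \<le> t * real (card (Costs n)) / real n"
      by (intro divide_right_mono mult_right_mono s) auto
    also have "\<dots> = real (card (Costs n)) / 2" using n by (simp add: t_def)
    finally show ?thesis .
  qed
  have "(\<Sum>c\<in>Costs n. on_cost A x c) = (\<Sum>c\<in>Costs n - Bad. on_cost A x c) + (\<Sum>c\<in>Bad. on_cost A x c)"
    by (rule sum.subset_diff) (auto simp: Bad_def fin_costs)
  also have "\<dots> \<ge> (\<Sum>c\<in>Costs n - Bad. on_cost A x c)"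
    using sum_nonneg[of Bad "on_cost A x"] cost_nonneg[OF v] by simp
  also have "(\<Sum>c\<in>Costs n - Bad. on_cost A x c) \<ge> (\<Sum>c\<in>Costs n - Bad. t)"
    by (rule sum_mono) (auto simp: Bad_def)
  also have "(\<Sum>c\<in>Costs n - Bad. t) = t * real (card (Costs n) - card Bad)"
    using card_Diff_subset[OF finB] by (simp add: Bad_def)
  also have "real (card (Costs n) - card Bad) = real (card (Costs n)) - real (card Bad)"
    by (rule of_nat_diff, rule card_mono[OF fin_costs]) (auto simp: Bad_def)
  finally have "t * (real (card (Costs n)) - real (card Bad)) \<le> (\<Sum>c\<in>Costs n. on_cost A x c)" .
  moreover have "t * (real (card (Costs n)) / 2) \<le> t * (real (card (Costs n)) - real (card Bad))"
    using cardB by (intro mult_left_mono) (auto simp: t_def)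
  ultimately show ?thesis by (simp add: t_def)
qed

lemma det_lower:
  assumes v: "on_valid n A" and z: "on_zero_error n A" and n: "n \<ge> 1"
  shows "real n / 4 \<le> on_exp_cost n A"
proof -
  have X: "card (Inputs n) > 0"
    using fin_inputs[of n] by (auto simp: card_gt_0_iff Inputs_def intro: exI[of _ "replicate n True"])
  have "[1..<n+1] \<in> Costs n" by (auto simp: Costs_def permutations_of_set_def)
  then have C: "card (Costs n) > 0" using fin_costs[of n] by (auto simp: card_gt_0_iff)
  have "(\<Sum>x\<in>Inputs n. real n * real (card (Costs n)) / 4) \<le> (\<Sum>x\<in>Inputs n. \<Sum>c\<in>Costs n. on_cost A x c)"
    by (rule sum_mono, rule per_input[OF v z n])
  then have "real (card (Inputs n)) * (real n * real (card (Costs n)) / 4) \<le> (\<Sum>x\<in>Inputs n. \<Sum>c\<in>Costs n. on_cost A x c)"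
    by simp
  then show ?thesis unfolding on_exp_cost_def using X C
    by (simp add: field_simps)
qed

definition pos :: "nat list \<Rightarrow> nat \<Rightarrow> nat" where
  "pos c v = (LEAST i. i < length c \<and> c ! i = v)"

definition sel :: "nat \<Rightarrow> nat list \<Rightarrow> nat \<Rightarrow> nat" where
  "sel n c k = (if pos c (Suc k) < n then pos c (Suc k) else 0)"

definition offB :: "nat \<Rightarrow> off_alg" where
  "offB n c h = (if length h < n \<and> (\<forall>b\<in>set h. b) then Inl (sel n c (length h)) else Inr (\<forall>b\<in>set h. b))"

lemma offB_valid: assumes n: "n \<ge> 1" shows "off_valid n (offB n)"
proof -
  have "sel n c k < n" for c k using n unfolding sel_def by auto
  then show ?thesis unfolding off_valid_def offB_def by (auto split: if_splits)
qed

lemma sel_props: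
  assumes c: "c \<in> Costs n" and k: "k < n"
  shows "sel n c k < n" "c ! sel n c k = Suc k"
proof -
  have "Suc k \<in> set c" using c k unfolding Costs_def permutations_of_set_def by auto
  then have "\<exists>i. i < length c \<and> c ! i = Suc k" by (simp add: in_set_conv_nth)
  then have "pos c (Suc k) < length c \<and> c ! pos c (Suc k) = Suc k"
    unfolding pos_def by (rule LeastI_ex)
  moreover have "length c = n" using costs_len[OF c] .
  ultimately have "pos c (Suc k) < n" "c ! pos c (Suc k) = Suc k" by auto
  moreover then have "sel n c k = pos c (Suc k)" unfolding sel_def by simp
  ultimately show "sel n c k < n" "c ! sel n c k = Suc k" by simp_all
qed

lemma sel_inj:
  assumes c: "c \<in> Costs n" and "j < n" "j' < n" "sel n c j = sel n c j'"
  shows "j = j'"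
  using sel_props(2)[OF c assms(2)] sel_props(2)[OF c assms(3)] assms(4) by (metis Suc_inject)

lemma sel_surj:
  assumes c: "c \<in> Costs n"
  shows "sel n c ` {..<n} = {..<n}"
proof -
  have "inj_on (sel n c) {..<n}" using sel_inj[OF c] by (auto intro: inj_onI)
  moreover have "sel n c ` {..<n} \<subseteq> {..<n}" using sel_props(1)[OF c] by auto
  ultimately show ?thesis by (intro endo_inj_surj) auto
qed

definition go :: "nat \<Rightarrow> nat list \<Rightarrow> bool list \<Rightarrow> nat \<Rightarrow> bool" where
  "go n c x k = (k < n \<and> (\<forall>j<k. x ! sel n c j))"

definition hist :: "nat \<Rightarrow> nat list \<Rightarrow> bool list \<Rightarrow> nat \<Rightarrow> bool list" where
  "hist n c x k = map (\<lambda>j. x ! sel n c j) [0..<k]"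

lemma offB_hist: "offB n c (hist n c x k) = (if go n c x k then Inl (sel n c k) else Inr (\<forall>j<k. x ! sel n c j))"
proof -
  have l: "length (hist n c x k) = k" by (simp add: hist_def)
  have a: "(\<forall>b\<in>set (hist n c x k). b) = (\<forall>j<k. x ! sel n c j)" by (auto simp: hist_def)
  show ?thesis unfolding offB_def l a go_def by simp
qed

lemma off_run_inv:
  assumes c: "c \<in> Costs n" and "\<forall>k'<k. go n c x k'"
  shows "off_run (offB n) x c k = ((\<Sum>j<k. real (Suc j)), hist n c x k)"
  using assms(2)
proof (induction k)
  case 0 then show ?case by (simp add: hist_def)
next
  case (Suc k)
  then have IH: "off_run (offB n) x c k = ((\<Sum>j<k. real (Suc j)), hist n c x k)" by simp
  have g: "go n c x k" using Suc.prems by simp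
  then have "k < n" by (simp add: go_def)
  have b: "offB n c (hist n c x k) = Inl (sel n c k)" using g by (simp add: offB_hist)
  have "off_run (offB n) x c (Suc k) = ((\<Sum>j<k. real (Suc j)) + real (c ! sel n c k), hist n c x k @ [x ! sel n c k])"
    using IH b by simp
  then show ?case using sel_props[OF c \<open>k < n\<close>] by (simp add: hist_def)
qed


definition TT :: "nat \<Rightarrow> nat list \<Rightarrow> bool list \<Rightarrow> nat" where
  "TT n c x = (LEAST k. \<not> go n c x k)"

lemma TT_props:
  shows "\<not> go n c x (TT n c x)" "\<And>k. k < TT n c x \<Longrightarrow> go n c x k" "TT n c x \<le> n"
proof -
  have ng: "\<not> go n c x n" by (simp add: go_def)
  show "\<not> go n c x (TT n c x)" unfolding TT_def by (rule LeastI, rule ng)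
  show "\<And>k. k < TT n c x \<Longrightarrow> go n c x k" unfolding TT_def using not_less_Least by blast
  show "TT n c x \<le> n" unfolding TT_def by (rule Least_le, rule ng)
qed

lemma off_run_TT:
  assumes c: "c \<in> Costs n" and "k \<le> TT n c x"
  shows "off_run (offB n) x c k = ((\<Sum>j<k. real (Suc j)), hist n c x k)"
  using off_run_inv[OF c] TT_props(2) assms(2) by (meson less_le_trans)

lemma off_time_TT:
  assumes c: "c \<in> Costs n"
  shows "off_time (offB n) x c = TT n c x"
  unfolding off_time_def
proof (rule Least_equality)
  show "\<exists>b. offB n c (snd (off_run (offB n) x c (TT n c x))) = Inr b"
    using off_run_TT[OF c order.refl] TT_props(1) by (simp add: offB_hist)
next
  fix y assume y: "\<exists>b. offB n c (snd (off_run (offB n) x c y)) = Inr b"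
  show "TT n c x \<le> y"
  proof (rule ccontr)
    assume "\<not> TT n c x \<le> y"
    then have "y < TT n c x" by simp
    then have "go n c x y" "off_run (offB n) x c y = ((\<Sum>j<y. real (Suc j)), hist n c x y)"
      using TT_props(2) off_run_TT[OF c] by auto
    with y show False by (simp add: offB_hist)
  qed
qed

lemma off_halts_B: assumes c: "c \<in> Costs n" shows "off_halts (offB n) x c"
proof -
  have "offB n c (snd (off_run (offB n) x c (TT n c x))) = Inr (\<forall>j<TT n c x. x ! sel n c j)"
    using off_run_TT[OF c order.refl] TT_props(1)[of n c x] by (simp add: offB_hist)
  then show ?thesis unfolding off_halts_def by blast
qed

lemma off_output_B:
  assumes c: "c \<in> Costs n"
  shows "off_output (offB n) x c = (\<forall>j<TT n c x. x ! sel n c j)"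
  unfolding off_output_def off_time_TT[OF c] using off_run_TT[OF c order.refl] TT_props(1)
  by (simp add: offB_hist)

lemma off_correct:
  assumes c: "c \<in> Costs n" and x: "x \<in> Inputs n"
  shows "off_output (offB n) x c = AND_f x"
proof -
  have lx: "length x = n" using x by (simp add: Inputs_def)
  have "(\<forall>j<TT n c x. x ! sel n c j) = AND_f x"
  proof
    assume a: "\<forall>j<TT n c x. x ! sel n c j"
    have "TT n c x = n"
    proof (rule ccontr)
      assume "TT n c x \<noteq> n"
      then have "TT n c x < n" using TT_props(3) le_neq_implies_less by blast
      then show False using TT_props(1)[of n c x] a by (simp add: go_def)
    qed
    then have "\<forall>j<n. x ! sel n c j" using a by simp
    then have "\<forall>i\<in>sel n c ` {..<n}. x ! i" by auto
    then have "\<forall>i<n. x ! i" using sel_surj[OF c] by auto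
    then show "AND_f x" unfolding AND_f_def using lx by (auto simp: in_set_conv_nth)
  next
    assume "AND_f x"
    then have "\<forall>i<n. x ! i" unfolding AND_f_def using lx by auto
    then show "\<forall>j<TT n c x. x ! sel n c j"
    proof (intro allI impI)
      fix j assume "\<forall>i<n. x ! i" "j < TT n c x"
      moreover then have "j < n" using TT_props(3)[of n c x] by linarith
      ultimately show "x ! sel n c j" using sel_props(1)[OF c] by auto
    qed
  qed
  then show ?thesis using off_output_B[OF c] by simp
qed

lemma off_cost_B:
  assumes c: "c \<in> Costs n"
  shows "off_cost (offB n) x c = (\<Sum>j<n. if (\<forall>j'<j. x ! sel n c j') then real (Suc j) else 0)"
proof -
  have "off_cost (offB n) x c = (\<Sum>j<TT n c x. real (Suc j))"
    unfolding off_cost_def off_time_TT[OF c] using off_run_TT[OF c order.refl] by simp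
  also have "\<dots> = (\<Sum>j<n. if j < TT n c x then real (Suc j) else 0)"
  proof -
    have "{..<n} \<inter> {j. j < TT n c x} = {..<TT n c x}" using TT_props(3)[of n c x] by auto
    then show ?thesis by (simp add: sum.If_cases)
  qed
  also have "\<dots> = (\<Sum>j<n. if (\<forall>j'<j. x ! sel n c j') then real (Suc j) else 0)"
  proof (rule sum.cong[OF refl])
    fix j assume j: "j \<in> {..<n}"
    have "j < TT n c x \<longleftrightarrow> (\<forall>j'<j. x ! sel n c j')"
    proof
      assume "j < TT n c x" then show "\<forall>j'<j. x ! sel n c j'" using TT_props(2) by (simp add: go_def)
    next
      assume a: "\<forall>j'<j. x ! sel n c j'"
      show "j < TT n c x"
      proof (rule ccontr)
        assume "\<not> j < TT n c x"
        then have "TT n c x \<le> j" by simp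
        then show False using TT_props(1)[of n c x] a j by (auto simp: go_def)
      qed
    qed
    then show "(if j < TT n c x then real (Suc j) else 0) = (if (\<forall>j'<j. x ! sel n c j') then real (Suc j) else 0)"
      by simp
  qed
  finally show ?thesis .
qed


definition gI :: "nat \<Rightarrow> nat list \<Rightarrow> nat \<Rightarrow> bool list \<Rightarrow> real" where
  "gI n c k x = (if (\<forall>j'<k. x ! sel n c j') then 1 else 0)"

lemma gI_sum:
  assumes c: "c \<in> Costs n"
  shows "j \<le> n \<Longrightarrow> (\<Sum>x\<in>Inputs n. gI n c j x) = real (card (Inputs n)) / 2 ^ j"
proof (induction j)
  case 0 then show ?case by (simp add: gI_def)
next
  case (Suc j)
  then have jn: "j < n" by simp
  define p where "p = sel n c j"
  have pn: "p < n" using sel_props(1)[OF c jn] by (simp add: p_def)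
  define F where "F = (\<lambda>x::bool list. x[p := \<not> x ! p])"
  have FF: "F (F x) = x" if "x \<in> Inputs n" for x
    using that pn by (auto simp: F_def Inputs_def)
  have FI: "F x \<in> Inputs n" if "x \<in> Inputs n" for x
    using that by (auto simp: F_def Inputs_def)
  have neq: "sel n c j' \<noteq> p" if "j' < j" for j'
    using sel_inj[OF c, of j' j] that jn by (auto simp: p_def)
  have split: "gI n c j x = gI n c (Suc j) x + gI n c (Suc j) (F x)" if "x \<in> Inputs n" for x
  proof -
    have lx: "length x = n" using that by (simp add: Inputs_def)
    have sj: "sel n c j = p" by (simp add: p_def)
    have fx: "F x ! sel n c j' = x ! sel n c j'" if "j' < j" for j'
      using neq[OF that] by (simp add: F_def)
    have fp: "F x ! p = (\<not> x ! p)" using lx pn by (simp add: F_def)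
    have e1: "(\<forall>j'<Suc j. F x ! sel n c j') = ((\<forall>j'<j. x ! sel n c j') \<and> \<not> x ! p)"
      using fx fp sj by (auto simp: less_Suc_eq)
    have e2: "(\<forall>j'<Suc j. x ! sel n c j') = ((\<forall>j'<j. x ! sel n c j') \<and> x ! p)"
      using sj by (auto simp: less_Suc_eq)
    show ?thesis unfolding gI_def e1 e2 by auto
  qed
  have re: "(\<Sum>x\<in>Inputs n. gI n c (Suc j) (F x)) = (\<Sum>x\<in>Inputs n. gI n c (Suc j) x)"
    by (rule sum.reindex_bij_witness[where i = F and j = F]) (auto simp: FF FI)
  have "(\<Sum>x\<in>Inputs n. gI n c j x) = (\<Sum>x\<in>Inputs n. gI n c (Suc j) x) + (\<Sum>x\<in>Inputs n. gI n c (Suc j) (F x))"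
    by (simp add: split sum.distrib)
  then have "(\<Sum>x\<in>Inputs n. gI n c (Suc j) x) = (\<Sum>x\<in>Inputs n. gI n c j x) / 2" using re by simp
  then show ?case using Suc.IH jn by simp
qed

lemma geo_sum: "(\<Sum>j<n. real (Suc j) / 2 ^ j) = 4 - (2 * real n + 4) / 2 ^ n"
proof (induction n)
  case 0 then show ?case by simp
next
  case (Suc n)
  have "(\<Sum>j<Suc n. real (Suc j) / 2 ^ j) = (4 - (2 * real n + 4) / 2 ^ n) + real (Suc n) / 2 ^ n"
    unfolding sum.lessThan_Suc Suc.IH ..
  also have "\<dots> = 4 - (2 * real (Suc n) + 4) / 2 ^ Suc n"
    by (simp add: field_simps)
  finally show ?case .
qed

lemma geo_le: "(\<Sum>j<n. real (Suc j) / 2 ^ j) \<le> 4"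
proof -
  have "(2 * real n + 4) / 2 ^ n \<ge> 0" by simp
  then show ?thesis unfolding geo_sum by linarith
qed

lemma off_sum_x:
  assumes c: "c \<in> Costs n"
  shows "(\<Sum>x\<in>Inputs n. off_cost (offB n) x c) \<le> 4 * real (card (Inputs n))"
proof -
  have "(\<Sum>x\<in>Inputs n. off_cost (offB n) x c) = (\<Sum>x\<in>Inputs n. \<Sum>j<n. real (Suc j) * gI n c j x)"
    by (rule sum.cong[OF refl]) (auto simp: off_cost_B[OF c] gI_def intro!: sum.cong)
  also have "\<dots> = (\<Sum>j<n. real (Suc j) * (\<Sum>x\<in>Inputs n. gI n c j x))"
    by (subst sum.swap) (simp add: sum_distrib_left)
  also have "\<dots> = (\<Sum>j<n. real (Suc j) / 2 ^ j) * real (card (Inputs n))"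
    by (simp add: gI_sum[OF c] sum_distrib_right)
  also have "\<dots> \<le> 4 * real (card (Inputs n))"
    by (rule mult_right_mono[OF geo_le]) simp
  finally show ?thesis .
qed


lemma off_run_nonneg: "fst (off_run B x c k) \<ge> 0"
proof (induction k)
  case 0 then show ?case by simp
next
  case (Suc k)
  obtain s h where e: "off_run B x c k = (s, h)" by fastforce
  with Suc have "s \<ge> 0" by simp
  then show ?case using e by (cases "B c h") auto
qed

lemma off_exp_nonneg: "off_exp_cost n B \<ge> 0"
  unfolding off_exp_cost_def off_cost_def
  by (intro divide_nonneg_nonneg sum_nonneg off_run_nonneg) simp

lemma cards_pos: "card (Inputs n) > 0" "card (Costs n) > 0"
proof -
  show "card (Inputs n) > 0"
    using fin_inputs[of n] by (auto simp: card_gt_0_iff Inputs_def intro: exI[of _ "replicate n True"])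
  have "[1..<n+1] \<in> Costs n" by (auto simp: Costs_def permutations_of_set_def)
  then show "card (Costs n) > 0" using fin_costs[of n] by (auto simp: card_gt_0_iff)
qed

lemma offB_exp: "off_exp_cost n (offB n) \<le> 4"
proof -
  have "(\<Sum>x\<in>Inputs n. \<Sum>c\<in>Costs n. off_cost (offB n) x c) = (\<Sum>c\<in>Costs n. \<Sum>x\<in>Inputs n. off_cost (offB n) x c)"
    by (rule sum.swap)
  also have "\<dots> \<le> (\<Sum>c\<in>Costs n. 4 * real (card (Inputs n)))"
    by (rule sum_mono, rule off_sum_x)
  also have "\<dots> = 4 * (real (card (Inputs n)) * real (card (Costs n)))" by simp
  finally have le: "(\<Sum>x\<in>Inputs n. \<Sum>c\<in>Costs n. off_cost (offB n) x c) \<le> 4 * (real (card (Inputs n)) * real (card (Costs n)))" .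
  have pos: "real (card (Inputs n)) * real (card (Costs n)) > 0" using cards_pos by simp
  show ?thesis unfolding off_exp_cost_def using le pos by (simp add: divide_le_eq)
qed

lemma opt_le: "n \<ge> 1 \<Longrightarrow> opt_avg0 n \<le> 4"
proof -
  assume n: "n \<ge> 1"
  have "off_exp_cost n (offB n) \<in> {off_exp_cost n B | B. off_valid n B \<and> off_zero_error n B}"
    using offB_valid[OF n] off_halts_B off_correct unfolding off_zero_error_def by blast
  moreover have "bdd_below {off_exp_cost n B | B. off_valid n B \<and> off_zero_error n B}"
    by (rule bdd_belowI[of _ 0]) (auto simp: off_exp_nonneg)
  ultimately have "opt_avg0 n \<le> off_exp_cost n (offB n)" unfolding opt_avg0_def by (rule cInf_lower)
  then show ?thesis using offB_exp[of n] by simp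
qed

theorem mainTheorem11:
  shows "(\<exists>C::real. \<forall>n\<ge>1. opt_avg0 n \<le> C) \<and>
         (\<exists>\<epsilon>::real. \<epsilon> > 0 \<and>
            (\<forall>n\<ge>1. \<forall>(M :: 'a measure) (A :: 'a \<Rightarrow> on_alg).
               prob_space M \<and> (\<forall>\<omega>\<in>space M. on_valid n (A \<omega>) \<and> on_zero_error n (A \<omega>))
               \<longrightarrow> ennreal (\<epsilon> * real n) \<le> (\<integral>\<^sup>+ \<omega>. ennreal (on_exp_cost n (A \<omega>)) \<partial>M)))"
proof (rule conjI)
  show "\<exists>C::real. \<forall>n\<ge>1. opt_avg0 n \<le> C" using opt_le by blast
next
  show "\<exists>\<epsilon>::real. \<epsilon> > 0 \<and>
            (\<forall>n\<ge>1. \<forall>(M :: 'a measure) (A :: 'a \<Rightarrow> on_alg).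
               prob_space M \<and> (\<forall>\<omega>\<in>space M. on_valid n (A \<omega>) \<and> on_zero_error n (A \<omega>))
               \<longrightarrow> ennreal (\<epsilon> * real n) \<le> (\<integral>\<^sup>+ \<omega>. ennreal (on_exp_cost n (A \<omega>)) \<partial>M))"
  proof (intro exI[of _ "1/4::real"] conjI allI impI)
  show "(0::real) < 1/4" by simp
  fix n :: nat and M :: "'a measure" and A :: "'a \<Rightarrow> on_alg"
  assume n: "1 \<le> n"
  assume h: "prob_space M \<and> (\<forall>\<omega>\<in>space M. on_valid n (A \<omega>) \<and> on_zero_error n (A \<omega>))"
  then have ps: "prob_space M" by blast
  have "ennreal (1/4 * real n) = (\<integral>\<^sup>+ \<omega>. ennreal (1/4 * real n) \<partial>M)"
    using prob_space.emeasure_space_1[OF ps] by simp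
  also have "\<dots> \<le> (\<integral>\<^sup>+ \<omega>. ennreal (on_exp_cost n (A \<omega>)) \<partial>M)"
  proof (rule nn_integral_mono)
    fix \<omega> assume "\<omega> \<in> space M"
    then have "on_valid n (A \<omega>)" "on_zero_error n (A \<omega>)" using h by auto
    then have "real n / 4 \<le> on_exp_cost n (A \<omega>)" using det_lower n by blast
    then show "ennreal (1/4 * real n) \<le> ennreal (on_exp_cost n (A \<omega>))"
      by (intro ennreal_leI) simp
  qed
  finally show "ennreal (1/4 * real n) \<le> (\<integral>\<^sup>+ \<omega>. ennreal (on_exp_cost n (A \<omega>)) \<partial>M)" .
  qed
qed

end
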